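(* Let $\gamma=[0;1,1,c_3,1,c_5,1,c_7,1,\dots]$, i.e. $\gamma$ has infinite continued fraction expansion $[c_0;c_1,c_2,\dots]$ with $c_0=0$, $c_n=1$ for $n$ even $\ge2$ and for $n=1$, and $c_{2n+1}\in\{1,2\}$ for all $n\in\mathbb{N}$. Then for every $m\in\mathbb{N}$, $$\frac{2}{\pi}m\tan\left(\frac{\pi}{2}\left(m\gamma^{-1}-\lfloor m\gamma^{-1}\rfloor\right)\right)>\frac{1}{3}.$$
   Context: $[c_0;c_1,c_2,\dots]$ denotes the continued fraction $c_0+\cfrac{1}{c_1+\cfrac{1}{c_2+\cdots}}$. $\mathbb{N}=\{1,2,\dots\}$. *)

theory Defs
  imports Complex_Main
begin

primrec cf_conv :: "nat \<Rightarrow> (nat \<Rightarrow> nat) \<Rightarrow> real" where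
  "cf_conv 0 c = real (c 0)"
| "cf_conv (Suc n) c = real (c 0) + 1 / cf_conv n (\<lambda>k. c (Suc k))"

definition has_cfrac :: "real \<Rightarrow> (nat \<Rightarrow> nat) \<Rightarrow> bool" where
  "has_cfrac x c \<longleftrightarrow> (\<forall>n\<ge>1. c n \<ge> 1) \<and> (\<lambda>n. cf_conv n c) \<longlonglongrightarrow> x"

end

theory Submission
  imports Defs "HOL-Analysis.Analysis"
begin

definition good :: "(nat \<Rightarrow> nat) \<Rightarrow> bool" where
  "good c \<longleftrightarrow> c 0 = 0 \<and> c 1 = 1 \<and> (\<forall>n\<ge>1. c (2*n) = 1) \<and> (\<forall>n\<ge>1. c (2*n+1) \<in> {1,2})"

lemma good_ge1: assumes "good c" "k \<ge> 1" shows "c k \<ge> 1"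
proof (cases "even k")
  case True then obtain j where "k = 2*j" by auto
  with assms show ?thesis by (auto simp: good_def)
next
  case False then obtain j where j: "k = 2*j+1" using oddE by blast
  show ?thesis
  proof (cases "j = 0")
    case True with assms j show ?thesis by (auto simp: good_def)
  next
    case False with assms j have "c k \<in> {1,2}" by (auto simp: good_def)
    then show ?thesis by auto
  qed
qed

lemma cf_ge1: "(\<forall>k. c k \<ge> 1) \<Longrightarrow> cf_conv n c \<ge> 1"
proof (induction n arbitrary: c)
  case 0 then show ?case by simp
next
  case (Suc n)
  have "cf_conv n (\<lambda>k. c (Suc k)) \<ge> 1" using Suc by auto
  moreover have "real (c 0) \<ge> 1" using Suc.prems by (metis of_nat_1 of_nat_le_iff)
  ultimately show ?case by (simp add: add_increasing2)
qed

lemma good_range: assumes "good c" shows "1/2 \<le> cf_conv (Suc n) c \<and> cf_conv (Suc n) c \<le> 1"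
proof -
  have c0: "c 0 = 0" and c1: "c 1 = 1" using assms by (auto simp: good_def)
  have "1 \<le> cf_conv n (\<lambda>k. c (Suc k)) \<and> cf_conv n (\<lambda>k. c (Suc k)) \<le> 2"
  proof (cases n)
    case 0 then show ?thesis using c1 by simp
  next
    case (Suc j)
    have "cf_conv j (\<lambda>k. c (Suc (Suc k))) \<ge> 1"
      by (rule cf_ge1) (use good_ge1[OF assms] in auto)
    then show ?thesis using Suc c1 by simp
  qed
  then show ?thesis using c0 by (simp add: field_simps)
qed

definition sh :: "(nat \<Rightarrow> nat) \<Rightarrow> nat \<Rightarrow> nat" where
  "sh c = (\<lambda>k. if k < 2 then c k else c (k+2))"

lemma good_sh: assumes "good c" shows "good (sh c)"
proof -
  have a: "c (2*n) = 1" if "n \<ge> 1" for n using assms that by (auto simp: good_def)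
  have b: "c (2*n+1) \<in> {1,2}" if "n \<ge> 1" for n using assms that by (auto simp: good_def)
  have "sh c (2*n) = 1" if "n \<ge> 1" for n
  proof -
    have "sh c (2*n) = c (2*(n+1))" using that by (simp add: sh_def)
    thus ?thesis using a[of "n+1"] by simp
  qed
  moreover have "sh c (2*n+1) \<in> {1,2}" if "n \<ge> 1" for n
  proof -
    have "sh c (2*n+1) = c (2*(n+1)+1)" using that by (simp add: sh_def)
    thus ?thesis using b[of "n+1"] by simp
  qed
  ultimately show ?thesis using assms by (auto simp: good_def sh_def)
qed

lemma conv4: assumes "good c"
  shows "cf_conv (Suc (Suc (Suc (Suc n)))) c =
     (real (c 3) * cf_conv (Suc (Suc n)) (sh c) + 1) / ((2 * real (c 3) - 1) * cf_conv (Suc (Suc n)) (sh c) + 2)"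
proof -
  have c0: "c 0 = 0" and c1: "c 1 = 1" using assms by (auto simp: good_def)
  have c2: "c 2 = 1" using assms unfolding good_def by (metis mult.right_neutral order_refl)
  have c3: "c 3 \<ge> 1" using good_ge1[OF assms] by simp
  define z where "z = cf_conv n (\<lambda>k. c (Suc (Suc (Suc (Suc k)))))"
  have z: "z \<ge> 1" unfolding z_def by (rule cf_ge1) (use good_ge1[OF assms] in auto)
  have e1: "cf_conv (Suc (Suc (Suc (Suc n)))) c = 1/(1 + 1/(1 + 1/(real (c 3) + 1/z)))"
    using c0 c1 c2 by (simp add: z_def numeral_2_eq_2 numeral_3_eq_3)
  have e2: "cf_conv (Suc (Suc n)) (sh c) = 1/(1 + 1/z)"
    using c0 c1 by (simp add: z_def sh_def)
  have r3: "real (c 3) \<ge> 1" using c3 by simp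
  define r where "r = real (c 3)"
  have rp: "r \<ge> 1" using r3 unfolding r_def .
  have n1: "r*z+1 > 0" "r*z+z+1 > 0" "2*r*z+z+2 > 0" "z > 0" using z rp by (simp_all add: add_pos_pos)
  have L: "1/(1 + 1/(1 + 1/(r + 1/z))) = (r*z+z+1)/(2*r*z+z+2)"
  proof -
    have "r + 1/z = (r*z+1)/z" using n1 by (simp add: field_simps)
    hence "1/(r + 1/z) = z/(r*z+1)" by simp
    hence "1 + 1/(r + 1/z) = (r*z+z+1)/(r*z+1)" using n1 by (simp add: field_simps)
    hence "1/(1 + 1/(r + 1/z)) = (r*z+1)/(r*z+z+1)" by simp
    hence "1 + 1/(1 + 1/(r + 1/z)) = (2*r*z+z+2)/(r*z+z+1)" using n1 by (simp add: field_simps)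
    thus ?thesis by simp
  qed
  have g: "1/(1+1/z) = z/(z+1)" using z by (simp add: field_simps)
  have R: "(r * (z/(z+1)) + 1) / ((2*r-1) * (z/(z+1)) + 2) = (r*z+z+1)/(2*r*z+z+2)"
  proof -
    have a: "r * (z/(z+1)) + 1 = (r*z+z+1)/(z+1)" using z by (simp add: field_simps)
    have b: "(2*r-1) * (z/(z+1)) + 2 = (2*r*z+z+2)/(z+1)" using z by (simp add: field_simps)
    show ?thesis unfolding a b using z by simp
  qed
  have "cf_conv (Suc (Suc (Suc (Suc n)))) c = 1/(1 + 1/(1 + 1/(r + 1/z)))" using e1 r_def by simp
  also have "\<dots> = (r * (z/(z+1)) + 1) / ((2*r-1) * (z/(z+1)) + 2)" using L R by simp
  also have "\<dots> = (real (c 3) * cf_conv (Suc (Suc n)) (sh c) + 1) / ((2 * real (c 3) - 1) * cf_conv (Suc (Suc n)) (sh c) + 2)"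
    using e2 g r_def by simp
  finally show ?thesis .
qed


lemma alg2: fixes k g :: real assumes "k \<ge> 1" "g \<ge> 0"
  shows "g = (1 - 2*((k*g+1)/((2*k-1)*g+2))) / ((2*k-1)*((k*g+1)/((2*k-1)*g+2)) - k)"
proof -
  define D where "D = (2*k-1)*g+2"
  have D: "D > 0" unfolding D_def using assms by (smt (verit) mult_nonneg_nonneg)
  have e1: "1 - 2*((k*g+1)/D) = -g/D" using D unfolding D_def by (simp add: field_simps; simp add: algebra_simps)
  have e2: "(2*k-1)*((k*g+1)/D) - k = -1/D" using D unfolding D_def by (simp add: field_simps; simp add: algebra_simps)
  show ?thesis unfolding D_def[symmetric] e1 e2 using D by simp
qed

lemma alg3: fixes k x :: real assumes "(2*k-1)*x - k \<noteq> 0"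
  shows "x = (k*((1-2*x)/((2*k-1)*x - k))+1)/((2*k-1)*((1-2*x)/((2*k-1)*x - k))+2)"
proof -
  define E where "E = (2*k-1)*x - k"
  have E: "E \<noteq> 0" using assms unfolding E_def .
  have e1: "k*((1-2*x)/E)+1 = -x/E" using E unfolding E_def by (simp add: field_simps; simp add: algebra_simps)
  have e2: "(2*k-1)*((1-2*x)/E)+2 = -1/E" using E unfolding E_def by (simp add: field_simps; simp add: algebra_simps)
  show ?thesis unfolding E_def[symmetric] e1 e2 using E by simp
qed

lemma alg4: fixes k g :: real assumes "k \<ge> 1" "g > 0"
  shows "1/((k*g+1)/((2*k-1)*g+2)) = 2 - 1/(1/g + k)"
proof -
  have p: "k*g+1 > 0" "(2*k-1)*g+2 > 0" using assms by (smt (verit) mult_pos_pos)+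
  have "1/g + k = (1+k*g)/g" using assms by (simp add: field_simps)
  hence "2 - 1/(1/g + k) = (2+2*k*g-g)/(1+k*g)" using p by (simp add: field_simps)
  moreover have "1/((k*g+1)/((2*k-1)*g+2)) = ((2*k-1)*g+2)/(k*g+1)" by simp
  ultimately show ?thesis by (simp add: algebra_simps)
qed

lemma alg1': fixes g :: real assumes "1/2 \<le> g" "g \<le> 1"
  shows "4/7 \<le> (1*g+1)/((2*1-1)*g+2) \<and> (1*g+1)/((2*1-1)*g+2) \<le> 2/3
     \<and> (2*1-1)*((1*g+1)/((2*1-1)*g+2)) - 1 \<le> -1/5"
     "4/7 \<le> (2*g+1)/((2*2-1)*g+2) \<and> (2*g+1)/((2*2-1)*g+2) \<le> 2/3
     \<and> (2*2-1)*((2*g+1)/((2*2-1)*g+2)) - 2 \<le> -1/5"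
  using assms by (simp_all add: divide_simps)

lemma alg1: fixes k g :: real assumes "k=1 \<or> k=2" "1/2 \<le> g" "g \<le> 1"
  shows "4/7 \<le> (k*g+1)/((2*k-1)*g+2) \<and> (k*g+1)/((2*k-1)*g+2) \<le> 2/3
     \<and> (2*k-1)*((k*g+1)/((2*k-1)*g+2)) - k \<le> -1/5"
  using assms alg1' by auto

lemma stepQ: assumes g: "good c" and h: "has_cfrac \<gamma> c"
  shows "4/7 \<le> \<gamma> \<and> \<gamma> \<le> 2/3 \<and> (c 3 = 1 \<or> c 3 = 2) \<and>
    (\<exists>\<gamma>'. has_cfrac \<gamma>' (sh c) \<and>
      \<gamma> = (real (c 3)*\<gamma>'+1)/((2*real (c 3)-1)*\<gamma>'+2))"
proof -
  have "c (2*1+1) \<in> {1,2}" using g unfolding good_def by blast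
  hence c3: "c 3 \<in> {1,2}" by simp
  define k where "k = real (c 3)"
  have k: "k = 1 \<or> k = 2" using c3 unfolding k_def by auto
  define G where "G n = cf_conv (Suc (Suc (Suc (Suc n)))) c" for n
  define H where "H n = cf_conv (Suc (Suc n)) (sh c)" for n
  have GH: "G n = (k * H n + 1)/((2*k-1) * H n + 2)" for n
    unfolding G_def H_def k_def by (rule conv4[OF g])
  have Hb: "1/2 \<le> H n \<and> H n \<le> 1" for n unfolding H_def using good_range[OF good_sh[OF g]] by blast
  have Gb: "4/7 \<le> G n \<and> G n \<le> 2/3 \<and> (2*k-1)*G n - k \<le> -1/5" for n
    unfolding GH using alg1[OF k] Hb by blast
  have HG: "H n = (1 - 2*G n)/((2*k-1)*G n - k)" for n
    unfolding GH using alg2[of k "H n"] k Hb[of n] by fastforce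
  have lim0: "(\<lambda>n. cf_conv n c) \<longlonglongrightarrow> \<gamma>" using h unfolding has_cfrac_def by blast
  have limG: "G \<longlonglongrightarrow> \<gamma>"
  proof -
    have "(\<lambda>n. cf_conv (n+4) c) \<longlonglongrightarrow> \<gamma>" by (rule LIMSEQ_ignore_initial_segment[OF lim0])
    moreover have "(\<lambda>n. cf_conv (n+4) c) = G" unfolding G_def by (simp add: numeral_eq_Suc)
    ultimately show ?thesis by simp
  qed
  have lo: "4/7 \<le> \<gamma>" by (rule LIMSEQ_le_const[OF limG]) (use Gb in auto)
  have hi: "\<gamma> \<le> 2/3" by (rule LIMSEQ_le_const2[OF limG]) (use Gb in auto)
  have limE: "(\<lambda>n. (2*k-1)*G n - k) \<longlonglongrightarrow> (2*k-1)*\<gamma> - k" by (intro tendsto_intros limG)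
  have Eb: "(2*k-1)*\<gamma> - k \<le> -1/5" by (rule LIMSEQ_le_const2[OF limE]) (use Gb in auto)
  define \<gamma>' where "\<gamma>' = (1 - 2*\<gamma>)/((2*k-1)*\<gamma> - k)"
  have limH: "H \<longlonglongrightarrow> \<gamma>'"
  proof -
    have "(\<lambda>n. (1 - 2*G n)/((2*k-1)*G n - k)) \<longlonglongrightarrow> \<gamma>'"
      unfolding \<gamma>'_def using Eb by (intro tendsto_intros limG) auto
    moreover have "H = (\<lambda>n. (1 - 2*G n)/((2*k-1)*G n - k))" using HG by (rule ext)
    ultimately show ?thesis by simp
  qed
  have "(\<lambda>n. cf_conv (n+2) (sh c)) \<longlonglongrightarrow> \<gamma>'"
  proof -
    have "(\<lambda>n. cf_conv (n+2) (sh c)) = H" unfolding H_def by (simp add: numeral_eq_Suc)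
    thus ?thesis using limH by simp
  qed
  hence "(\<lambda>n. cf_conv n (sh c)) \<longlonglongrightarrow> \<gamma>'" by (rule LIMSEQ_offset)
  hence hc: "has_cfrac \<gamma>' (sh c)" unfolding has_cfrac_def using good_ge1[OF good_sh[OF g]] by blast
  have "\<gamma> = (k*\<gamma>'+1)/((2*k-1)*\<gamma>'+2)" unfolding \<gamma>'_def by (rule alg3) (use Eb in auto)
  then show ?thesis using lo hi hc c3 unfolding k_def by auto
qed

definition Q :: "real \<Rightarrow> bool" where "Q \<gamma> \<longleftrightarrow> (\<exists>c. good c \<and> has_cfrac \<gamma> c)"

lemma Qstep: assumes "Q \<gamma>"
  shows "\<exists>\<gamma>' (k::nat). Q \<gamma>' \<and> (k = 1 \<or> k = 2) \<and> 3/2 \<le> 1/\<gamma> \<and> 1/\<gamma> < 2 \<and> 3/2 \<le> 1/\<gamma>' \<and> 1/\<gamma>' < 2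
     \<and> 1/\<gamma> = 2 - 1/(1/\<gamma>' + real k)"
proof -
  obtain c where c: "good c" "has_cfrac \<gamma> c" using assms unfolding Q_def by blast
  obtain \<gamma>' where s: "has_cfrac \<gamma>' (sh c)" "\<gamma> = (real (c 3)*\<gamma>'+1)/((2*real (c 3)-1)*\<gamma>'+2)"
    using stepQ[OF c] by blast
  have b1: "4/7 \<le> \<gamma> \<and> \<gamma> \<le> 2/3" "c 3 = 1 \<or> c 3 = 2" using stepQ[OF c] by auto
  have b2: "4/7 \<le> \<gamma>' \<and> \<gamma>' \<le> 2/3" using stepQ[OF good_sh[OF c(1)] s(1)] by auto
  have Q': "Q \<gamma>'" unfolding Q_def using good_sh[OF c(1)] s(1) by blast
  have i1: "3/2 \<le> 1/\<gamma> \<and> 1/\<gamma> < 2" using b1 by (auto simp: field_simps)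
  have i2: "3/2 \<le> 1/\<gamma>' \<and> 1/\<gamma>' < 2" using b2 by (auto simp: field_simps)
  have r: "1/\<gamma> = 2 - 1/(1/\<gamma>' + real (c 3))"
    unfolding s(2) by (rule alg4) (use b2 b1(2) in auto)
  show ?thesis using Q' b1(2) i1 i2 r by blast
qed


lemma base_ineq: fixes d :: real assumes "1/2 \<le> d" "d < 1" shows "d > 1/3 + d^2/2"
proof -
  have "(d - 1/2) * (1 - d) \<ge> 0" using assms by simp
  moreover have "(d-1/2)*(1-d) = 3/2*d - d*d - 1/2" by (simp add: field_simps)
  ultimately have "d*d \<le> 3/2*d - 1/2" by linarith
  thus ?thesis using assms by (simp add: power2_eq_square)
qed

lemma big_ineq: fixes d m :: real assumes "1/4 < d" "d < 1" "m \<ge> 2" shows "m*d > 1/3 + d^2/2"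
proof -
  have "m*d \<ge> 2*d" using assms by (simp add: mult_right_mono)
  moreover have "d^2 \<le> d" using assms by (simp add: power2_eq_square mult_le_cancel_right1 mult_left_le)
  ultimately show ?thesis using assms by linarith
qed

lemma core: "\<forall>\<gamma> (n::int). Q \<gamma> \<longrightarrow> 1 \<le> m \<longrightarrow> 0 \<le> real m/\<gamma> - n \<longrightarrow> real m/\<gamma> - n < 1 \<longrightarrow>
    real m*(real m/\<gamma> - n) > 1/3 + (real m/\<gamma> - n)^2/2"
proof (induction m rule: less_induct)
  case (less m)
  show ?case
  proof (intro allI impI)
    fix \<gamma> :: real and n :: int
    assume Qg: "Q \<gamma>" and m1: "1 \<le> m" and d0: "0 \<le> real m/\<gamma> - n" and d1: "real m/\<gamma> - n < 1"
    obtain \<gamma>' and k :: nat where st: "Q \<gamma>'" "k = 1 \<or> k = 2" "3/2 \<le> 1/\<gamma>" "1/\<gamma> < 2"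
      "3/2 \<le> 1/\<gamma>'" "1/\<gamma>' < 2" "1/\<gamma> = 2 - 1/(1/\<gamma>' + real k)"
      using Qstep[OF Qg] by blast
    define a where "a = 1/\<gamma>"
    define a' where "a' = 1/\<gamma>'"
    define \<delta> where "\<delta> = real m * a - n"
    define u where "u = a' + real k"
    have mg: "real m/\<gamma> = real m * a" unfolding a_def by simp
    have dd: "real m/\<gamma> - n = \<delta>" unfolding \<delta>_def mg ..
    have a: "3/2 \<le> a" "a < 2" "3/2 \<le> a'" "a' < 2" using st unfolding a_def a'_def by auto
    have ku: "real k \<ge> 1" "real k \<le> 2" using st(2) by auto
    have u: "5/2 \<le> u" "u < 4" using a ku unfolding u_def by auto
    have au: "a = 2 - 1/u" using st(7) unfolding a_def a'_def u_def by simp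
    have d0': "0 \<le> \<delta>" and d1': "\<delta> < 1" using d0 d1 dd by auto
    have "real m * \<delta> > 1/3 + \<delta>^2/2"
    proof (cases "n \<le> int m")
      case True
      have "real m * a - real m \<le> \<delta>" using True unfolding \<delta>_def by simp
      hence "real m * (a - 1) < 1" using d1' by (simp add: algebra_simps)
      moreover have "real m * (a - 1) \<ge> real m * (1/2)" using a by (intro mult_left_mono) auto
      ultimately have "real m < 2" by simp
      hence m: "m = 1" using m1 by simp
      have "n \<ge> 1"
      proof -
        have "real_of_int n > a - 1" using d1' m unfolding \<delta>_def by simp
        hence "real_of_int n > 0" using a by simp
        thus ?thesis by simp
      qed
      hence n: "n = 1" using True m by simp
      have "\<delta> = a - 1" unfolding \<delta>_def m n by simp
      hence "1/2 \<le> \<delta>" using a by simp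
      from base_ineq[OF this d1'] show ?thesis using m by simp
    next
      case False
      define m' where "m' = 2 * int m - n"
      define n' where "n' = int k * n - (2 * int k - 1) * int m"
      have up: "u > 0" using u by simp
      have nlt: "real_of_int n < 2 * real m"
      proof -
        have "real_of_int n \<le> real m * a" using d0' unfolding \<delta>_def by simp
        also have "\<dots> < real m * 2" using a m1 by (intro mult_strict_left_mono) auto
        finally show ?thesis by simp
      qed
      have m'pos: "m' \<ge> 1" unfolding m'_def using nlt by linarith
      have m'lt: "m' < int m" unfolding m'_def using False by simp
      define \<delta>' where "\<delta>' = real_of_int m' * a' - real_of_int n'"
      have dd': "\<delta>' = u * \<delta>"
      proof -
        have "u * \<delta> = u * (real m * (2 - 1/u) - n)" unfolding \<delta>_def au ..
        also have "\<dots> = real m * (2*u - 1) - u * n" using up by (simp add: algebra_simps)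
        also have "\<dots> = \<delta>'" unfolding \<delta>'_def m'_def n'_def u_def by (simp add: algebra_simps)
        finally show ?thesis by simp
      qed
      have md: "real m * \<delta> = real_of_int m' * \<delta>' - \<delta>'^2/u"
      proof -
        have "real_of_int m' * \<delta>' - \<delta>'^2/u = (real_of_int m' - \<delta>) * (u * \<delta>)"
          unfolding dd' using up by (simp add: power2_eq_square algebra_simps)
        also have "real_of_int m' - \<delta> = real m * (2 - a)" unfolding m'_def \<delta>_def by (simp add: algebra_simps)
        also have "\<dots> = real m / u" unfolding au by simp
        finally show ?thesis using up by simp
      qed
      show ?thesis
      proof (cases "\<delta>' < 1")
        case True
        have nm: "nat m' < m" using m'lt m'pos by simp
        have rm: "real (nat m') = real_of_int m'" using m'pos by simp
        have d'0: "0 \<le> \<delta>'" unfolding dd' using up d0' by simp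
        have e: "real (nat m') / \<gamma>' - n' = \<delta>'" unfolding rm \<delta>'_def a'_def by simp
        have h1: "1 \<le> nat m'" using m'pos by simp
        have IH: "real (nat m') * \<delta>' > 1/3 + \<delta>'^2/2"
          using less.IH[OF nm, rule_format, of \<gamma>' n', OF st(1) h1, unfolded e, OF d'0 True] .
        hence IH': "real_of_int m' * \<delta>' > 1/3 + \<delta>'^2/2" unfolding rm .
        have "\<delta>'^2/2 - \<delta>'^2/u - \<delta>^2/2 = \<delta>^2 * ((u^2 - 2*u - 1)/2)"
          unfolding dd' using up by (simp add: power2_eq_square field_simps)
        moreover have "u^2 - 2*u - 1 \<ge> 0"
        proof -
          have "(u - 5/2) * (u + 1/2) \<ge> 0" using u by simp
          thus ?thesis by (simp add: power2_eq_square algebra_simps)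
        qed
        hence "\<delta>^2 * ((u^2 - 2*u - 1)/2) \<ge> 0" by simp
        ultimately have "\<delta>'^2/2 - \<delta>'^2/u - \<delta>^2/2 \<ge> 0" by simp
        thus ?thesis using IH' md by linarith
      next
        case False
        have "u * \<delta> \<ge> 1" using False dd' by simp
        hence "1/4 < \<delta>"
        proof -
          assume h: "u * \<delta> \<ge> 1"
          have dp: "\<delta> \<noteq> 0" using h by auto
          have "u * \<delta> < 4 * \<delta>" using u d0' dp by (intro mult_strict_right_mono) auto
          thus ?thesis using h u d0' by linarith
        qed
        moreover have "m \<ge> 2"
        proof (rule ccontr)
          assume "\<not> m \<ge> 2"
          hence "m = 1" using m1 by simp
          hence "n \<ge> 2" using False `\<not> n \<le> int m` by simp
          hence "\<delta> < 0" unfolding \<delta>_def using `m = 1` a by simp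
          thus False using d0' by simp
        qed
        ultimately show ?thesis using big_ineq[of \<delta> "real m"] d1' by simp
      qed
    qed
    thus "real m*(real m/\<gamma> - n) > 1/3 + (real m/\<gamma> - n)^2/2" using dd by simp
  qed
qed

theorem lemma5p4:
  fixes c :: "nat \<Rightarrow> nat" and \<gamma> :: real
  assumes "c 0 = 0" and "c 1 = 1"
    and "\<And>n. n \<ge> 1 \<Longrightarrow> c (2 * n) = 1"
    and "\<And>n. n \<ge> 1 \<Longrightarrow> c (2 * n + 1) \<in> {1, 2}"
    and "has_cfrac \<gamma> c"
  shows "\<forall>m::nat. m \<ge> 1 \<longrightarrow>
    2 / pi * real m * tan (pi / 2 * (real m / \<gamma> - of_int \<lfloor>real m / \<gamma>\<rfloor>)) > 1 / 3"
proof (intro allI impI)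
  fix m :: nat assume m1: "m \<ge> 1"
  have g: "good c" unfolding good_def using assms(1-4) by auto
  have Qg: "Q \<gamma>" unfolding Q_def using g assms(5) by blast
  define n where "n = \<lfloor>real m / \<gamma>\<rfloor>"
  define d where "d = real m / \<gamma> - of_int n"
  have d0: "0 \<le> d" unfolding d_def n_def by simp
  have d1: "d < 1" using real_of_int_floor_add_one_gt[of "real m / \<gamma>"] unfolding d_def n_def by linarith
  have md: "real m * d > 1/3 + d^2/2"
    using core[of m, rule_format, OF Qg m1, of n] d0 d1 unfolding d_def by simp
  have "d^2/2 \<ge> 0" by simp
  hence md': "real m * d > 1/3" using md by linarith
  define x where "x = pi/2 * d"
  have x0: "0 \<le> x" and x1: "x < pi/2" unfolding x_def using d0 d1 pi_gt_zero by (auto simp: mult_less_cancel_left1)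
  have tx: "x \<le> tan x"
  proof -
    have "0 \<le> tan x" using tan_pos_pi2_le[OF x0 x1] .
    hence "arctan (tan x) \<le> tan x" by (rule arctan_le_self)
    moreover have "arctan (tan x) = x" using x0 x1 by (intro arctan_tan) auto
    ultimately show ?thesis by simp
  qed
  have "2 / pi * real m * x = real m * d" unfolding x_def using pi_gt_zero by (simp add: field_simps)
  moreover have "2 / pi * real m * x \<le> 2 / pi * real m * tan x"
    using tx pi_gt_zero by (intro mult_left_mono) auto
  ultimately show "2 / pi * real m * tan (pi / 2 * (real m / \<gamma> - of_int \<lfloor>real m / \<gamma>\<rfloor>)) > 1 / 3"
    using md' unfolding x_def d_def n_def by linarith
qed

end
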